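(* Let $n=p_1p_2\cdots p_l$ be an odd composite integer, where $p_1,\dots,p_l$ are distinct primes. Then $C_R(\mathbb{Z}_n)=\prod_{i=1}^{l} C_R(\mathbb{Z}_{p_i})$.
   Context: For a positive integer $m$, a reduced Weierstrass curve over $\mathbb{Z}_{m}$ is $y^2=x^3+ax+b$ with $(a,b)\in\mathbb{Z}_{m}^2$; it is nonsingular iff $\Delta=-16(4a^3+27b^2)$ is a unit in $\mathbb{Z}_{m}$. Two such curves with coefficients $(a,b)$ and $(\bar a,\bar b)$ are isomorphic iff there is $u\in\mathbb{Z}_{m}^*$ with $\bar a=u^{-4}a$ and $\bar b=u^{-6}b$ (i.e. related by the change of variables $(x,y)\mapsto(u^2x,u^3y)$). $C_R(\mathbb{Z}_m)$ denotes the number of isomorphism classes of nonsingular reduced curves over $\mathbb{Z}_m$. *)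

theory Defs
  imports "HOL-Number_Theory.Number_Theory"
begin

text \<open>Elements of Z_m are represented by integers in {0..<m}. A pair (a,b) gives the
reduced Weierstrass curve y^2 = x^3 + a x + b; it is nonsingular iff the discriminant
-16(4a^3+27b^2) is a unit of Z_m, i.e. coprime to m.\<close>

definition nonsing_curves :: "nat \<Rightarrow> (int \<times> int) set" where
  "nonsing_curves m = {(a, b). a \<in> {0..<int m} \<and> b \<in> {0..<int m} \<and>
      coprime (-16 * (4 * a ^ 3 + 27 * b ^ 2)) (int m)}"

text \<open>(a,b) and (a',b') are isomorphic iff there is a unit u of Z_m with
a' = u^(-4) a and b' = u^(-6) b, i.e. a = u^4 a' and b = u^6 b' in Z_m.\<close>

definition curve_iso :: "nat \<Rightarrow> ((int \<times> int) \<times> (int \<times> int)) set" where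
  "curve_iso m = {((a, b), (a', b')).
      (a, b) \<in> nonsing_curves m \<and> (a', b') \<in> nonsing_curves m \<and>
      (\<exists>u \<in> {0..<int m}. coprime u (int m) \<and>
         [u ^ 4 * a' = a] (mod int m) \<and> [u ^ 6 * b' = b] (mod int m))}"

definition C_R :: "nat \<Rightarrow> nat" where
  "C_R m = card (nonsing_curves m // curve_iso m)"

end

theory Submission
  imports Defs
begin

lemma quot_bij:
  assumes bij: "bij_betw g A A'" and R: "R \<subseteq> A \<times> A" and R': "R' \<subseteq> A' \<times> A'"
    and iff: "\<And>x y. x \<in> A \<Longrightarrow> y \<in> A \<Longrightarrow> (x, y) \<in> R \<longleftrightarrow> (g x, g y) \<in> R'"
  shows "card (A // R) = card (A' // R')"
proof -
  have inj: "inj_on g A" and im: "g ` A = A'" using bij by (auto simp: bij_betw_def)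
  have key: "g ` (R `` {x}) = R' `` {g x}" if "x \<in> A" for x
  proof
    show "g ` (R `` {x}) \<subseteq> R' `` {g x}" using that R iff by auto
  next
    show "R' `` {g x} \<subseteq> g ` (R `` {x})"
    proof
      fix z assume "z \<in> R' `` {g x}"
      then have "z \<in> A'" "(g x, z) \<in> R'" using R' by auto
      then obtain y where "y \<in> A" "z = g y" using im by auto
      then show "z \<in> g ` (R `` {x})" using iff[OF that \<open>y \<in> A\<close>] \<open>(g x, z) \<in> R'\<close> by auto
    qed
  qed
  have "bij_betw ((`) g) (A // R) (A' // R')"
  proof (rule bij_betw_imageI)
    show "inj_on ((`) g) (A // R)"
    proof (rule inj_onI)
      fix X Y assume "X \<in> A // R" "Y \<in> A // R" "g ` X = g ` Y"
      moreover have "X \<subseteq> A" "Y \<subseteq> A" using calculation R by (auto simp: quotient_def)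
      ultimately show "X = Y" using inj by (simp add: inj_on_image_eq_iff)
    qed
    show "(`) g ` (A // R) = A' // R'"
      unfolding quotient_def using key im by auto
  qed
  then show ?thesis by (rule bij_betw_same_card)
qed

lemma quot_prod:
  assumes R1: "R1 \<subseteq> B \<times> B" "\<And>b. b \<in> B \<Longrightarrow> (b, b) \<in> R1"
    and R2: "R2 \<subseteq> C \<times> C" "\<And>c. c \<in> C \<Longrightarrow> (c, c) \<in> R2"
  shows "card ((B \<times> C) // {((b, c), (b', c')). (b, b') \<in> R1 \<and> (c, c') \<in> R2})
       = card (B // R1) * card (C // R2)"
proof -
  let ?PR = "{((b, c), (b', c')). (b, b') \<in> R1 \<and> (c, c') \<in> R2}"
  have key: "?PR `` {(b, c)} = R1 `` {b} \<times> R2 `` {c}" for b c by auto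
  have ne: "X \<noteq> {}" if "X \<in> B // R1" for X using that R1 by (auto simp: quotient_def)
  have ne2: "X \<noteq> {}" if "X \<in> C // R2" for X using that R2 by (auto simp: quotient_def)
  have "bij_betw (\<lambda>(X, Y). X \<times> Y) (B // R1 \<times> C // R2) ((B \<times> C) // ?PR)"
  proof (rule bij_betw_imageI)
    show "inj_on (\<lambda>(X, Y). X \<times> Y) (B // R1 \<times> C // R2)"
    proof (rule inj_onI)
      fix p q assume "p \<in> B // R1 \<times> C // R2" "q \<in> B // R1 \<times> C // R2"
        "(case p of (X, Y) \<Rightarrow> X \<times> Y) = (case q of (X, Y) \<Rightarrow> X \<times> Y)"
      then show "p = q" using ne ne2 by (auto simp: times_eq_iff)
    qed
    show "(\<lambda>(X, Y). X \<times> Y) ` (B // R1 \<times> C // R2) = (B \<times> C) // ?PR"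
    proof
      show "(\<lambda>(X, Y). X \<times> Y) ` (B // R1 \<times> C // R2) \<subseteq> (B \<times> C) // ?PR"
      proof
        fix Z assume "Z \<in> (\<lambda>(X, Y). X \<times> Y) ` (B // R1 \<times> C // R2)"
        then obtain b c where bc: "b \<in> B" "c \<in> C" "Z = R1 `` {b} \<times> R2 `` {c}"
          by (auto simp: quotient_def)
        then have Z: "Z = ?PR `` {(b, c)}" by (simp only: key)
        have "?PR `` {(b, c)} \<in> (B \<times> C) // ?PR" using bc by (intro quotientI) simp
        then show "Z \<in> (B \<times> C) // ?PR" by (simp only: Z)
      qed
    next
      show "(B \<times> C) // ?PR \<subseteq> (\<lambda>(X, Y). X \<times> Y) ` (B // R1 \<times> C // R2)"
      proof
        fix Z assume "Z \<in> (B \<times> C) // ?PR"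
        then obtain b c where bc: "b \<in> B" "c \<in> C" "Z = ?PR `` {(b, c)}"
          by (auto simp: quotient_def)
        then have "Z = (\<lambda>(X, Y). X \<times> Y) (R1 `` {b}, R2 `` {c})" by (simp only: key prod.case)
        moreover have "(R1 `` {b}, R2 `` {c}) \<in> B // R1 \<times> C // R2" using bc by (auto intro: quotientI)
        ultimately show "Z \<in> (\<lambda>(X, Y). X \<times> Y) ` (B // R1 \<times> C // R2)" by blast
      qed
    qed
  qed
  then have "card (B // R1 \<times> C // R2) = card ((B \<times> C) // ?PR)" by (rule bij_betw_same_card)
  then show ?thesis by (simp add: card_cartesian_product)
qed

definition red :: "nat \<Rightarrow> int \<times> int \<Rightarrow> int \<times> int" where
  "red a p = (fst p mod int a, snd p mod int a)"

lemma D_cong: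
  fixes x y x' y' m :: int
  assumes "[x = x'] (mod m)" "[y = y'] (mod m)"
  shows "[-16 * (4 * x ^ 3 + 27 * y ^ 2) = -16 * (4 * x' ^ 3 + 27 * y' ^ 2)] (mod m)"
  using assms by (intro cong_mult cong_add cong_pow cong_refl)

lemma crt:
  fixes a b :: nat and r s :: int
  assumes "coprime a b" "a > 0" "b > 0"
  shows "\<exists>x \<in> {0..<int (a * b)}. [x = r] (mod int a) \<and> [x = s] (mod int b)"
proof -
  have "coprime (int a) (int b)" using assms by simp
  then obtain x where x: "[x = r] (mod int a)" "[x = s] (mod int b)"
    using binary_chinese_remainder_int by blast
  let ?y = "x mod (int a * int b)"
  have "[?y = x] (mod int a * int b)" by simp
  then have "[?y = x] (mod int a)" "[?y = x] (mod int b)"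
    by (auto intro: cong_dvd_modulus[OF \<open>[?y = x] (mod int a * int b)\<close>])
  then have "[?y = r] (mod int a)" "[?y = s] (mod int b)" using x cong_trans by blast+
  moreover have "?y \<in> {0..<int (a * b)}" using assms by simp
  ultimately show ?thesis by blast
qed

lemma cong_pow_mult_iff:
  fixes u v z w m :: int
  assumes "[u = v] (mod m)"
  shows "[u ^ k * z = w] (mod m) \<longleftrightarrow> [v ^ k * z = w] (mod m)"
proof -
  have "[u ^ k * z = v ^ k * z] (mod m)" using assms by (intro cong_mult cong_pow cong_refl)
  then show ?thesis using cong_sym cong_trans by metis
qed

lemma cong_mod_inner:
  fixes u z w :: int
  shows "[u * (z mod m) = w mod m] (mod m) \<longleftrightarrow> [u * z = w] (mod m)"
  by (simp add: cong_def mod_mult_right_eq)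

lemma cong_mod_inner2:
  fixes u z w :: int
  shows "[u * (z mod m) = w] (mod m) \<longleftrightarrow> [u * z = w] (mod m)"
  by (simp add: cong_def mod_mult_right_eq)

lemma NC_red:
  assumes "p \<in> nonsing_curves (a * b)" "a > 0" "b > 0"
  shows "red a p \<in> nonsing_curves a"
proof -
  obtain x y where p: "p = (x, y)" by force
  have c: "coprime (-16 * (4 * x ^ 3 + 27 * y ^ 2)) (int a * int b)"
    using assms p by (simp add: nonsing_curves_def)
  then have c1: "coprime (-16 * (4 * x ^ 3 + 27 * y ^ 2)) (int a)" by simp
  have "[-16 * (4 * x ^ 3 + 27 * y ^ 2) = -16 * (4 * (x mod a) ^ 3 + 27 * (y mod a) ^ 2)] (mod int a)"
    by (intro D_cong) (simp_all add: cong_sym)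
  then have "coprime (-16 * (4 * (x mod a) ^ 3 + 27 * (y mod a) ^ 2)) (int a)"
    using c1 cong_imp_coprime by blast
  then show ?thesis using assms by (simp add: p red_def nonsing_curves_def)
qed

lemma curve_refl:
  assumes "m > 0" "p \<in> nonsing_curves m"
  shows "(p, p) \<in> curve_iso m"
proof -
  obtain x y where p: "p = (x, y)" by force
  let ?u = "1 mod int m"
  have cu: "[?u = 1] (mod int m)" by simp
  have "coprime ?u (int m)" using cu cong_imp_coprime cong_sym by (metis coprime_1_left)
  moreover have "[?u ^ 4 * x = x] (mod int m)" "[?u ^ 6 * y = y] (mod int m)"
    using cong_pow_mult_iff[OF cu] by simp_all
  moreover have "?u \<in> {0..<int m}" using assms by simp
  ultimately show ?thesis using assms p unfolding curve_iso_def by blast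
qed

lemma curve_iso_sub: "curve_iso m \<subseteq> nonsing_curves m \<times> nonsing_curves m"
  unfolding curve_iso_def by auto

lemma C_R_mult:
  assumes cop: "coprime a b" and a: "a > 0" and b: "b > 0"
  shows "C_R (a * b) = C_R a * C_R b"
proof -
  have copi: "coprime (int a) (int b)" using cop by simp
  define g where "g p = (red a p, red b p)" for p
  let ?A = "nonsing_curves (a * b)"
  let ?PR = "{((p, q), (p', q')). (p, p') \<in> curve_iso a \<and> (q, q') \<in> curve_iso b}"
  have ab: "int (a * b) = int a * int b" by simp
  have bij: "bij_betw g ?A (nonsing_curves a \<times> nonsing_curves b)"
  proof (rule bij_betw_imageI)
    show "inj_on g ?A"
    proof (rule inj_onI)
      fix p q assume pq: "p \<in> ?A" "q \<in> ?A" "g p = g q"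
      obtain x y where p: "p = (x, y)" by force
      obtain x' y' where q: "q = (x', y')" by force
      have "[x = x'] (mod int a)" "[x = x'] (mod int b)" "[y = y'] (mod int a)" "[y = y'] (mod int b)"
        using pq(3) by (auto simp: g_def red_def p q cong_def)
      then have "[x = x'] (mod int a * int b)" "[y = y'] (mod int a * int b)"
        using coprime_cong_mult copi by blast+
      then show "p = q" using pq(1,2) p q
        by (auto simp: nonsing_curves_def intro: cong_less_imp_eq_int)
    qed
    show "g ` ?A = nonsing_curves a \<times> nonsing_curves b"
    proof
      show "g ` ?A \<subseteq> nonsing_curves a \<times> nonsing_curves b"
        using NC_red[OF _ a b] NC_red[of _ b a] b a by (auto simp: g_def mult.commute)
    next
      show "nonsing_curves a \<times> nonsing_curves b \<subseteq> g ` ?A"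
      proof
        fix z assume z: "z \<in> nonsing_curves a \<times> nonsing_curves b"
        obtain x1 y1 x2 y2 where zz: "z = ((x1, y1), (x2, y2))" by (metis prod.collapse)
        have r: "x1 \<in> {0..<int a}" "y1 \<in> {0..<int a}" "x2 \<in> {0..<int b}" "y2 \<in> {0..<int b}"
          and c1: "coprime (-16 * (4 * x1 ^ 3 + 27 * y1 ^ 2)) (int a)"
          and c2: "coprime (-16 * (4 * x2 ^ 3 + 27 * y2 ^ 2)) (int b)"
          using z zz by (auto simp: nonsing_curves_def)
        obtain x where x: "x \<in> {0..<int (a*b)}" "[x = x1] (mod int a)" "[x = x2] (mod int b)"
          using crt[OF cop a b] by blast
        obtain y where y: "y \<in> {0..<int (a*b)}" "[y = y1] (mod int a)" "[y = y2] (mod int b)"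
          using crt[OF cop a b] by blast
        have "coprime (-16 * (4 * x ^ 3 + 27 * y ^ 2)) (int a)"
          using c1 D_cong[OF x(2) y(2)] cong_imp_coprime cong_sym by blast
        moreover have "coprime (-16 * (4 * x ^ 3 + 27 * y ^ 2)) (int b)"
          using c2 D_cong[OF x(3) y(3)] cong_imp_coprime cong_sym by blast
        ultimately have "(x, y) \<in> ?A" using x y by (simp add: nonsing_curves_def)
        moreover have "g (x, y) = z" using x y r
          by (auto simp: g_def red_def zz cong_def)
        ultimately show "z \<in> g ` ?A" by blast
      qed
    qed
  qed
  have iff: "(p, q) \<in> curve_iso (a * b) \<longleftrightarrow> (g p, g q) \<in> ?PR" if pq: "p \<in> ?A" "q \<in> ?A" for p q
  proof -
    obtain x y where p: "p = (x, y)" by force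
    obtain x' y' where q: "q = (x', y')" by force
    have inA: "red a p \<in> nonsing_curves a" "red a q \<in> nonsing_curves a"
      using NC_red[OF _ a b] pq by auto
    have inB: "red b p \<in> nonsing_curves b" "red b q \<in> nonsing_curves b"
      using NC_red[of _ b a] pq a b by (auto simp: mult.commute)
    have E: "(\<exists>u \<in> {0..<int (a*b)}. coprime u (int (a*b)) \<and>
         [u ^ 4 * x' = x] (mod int (a*b)) \<and> [u ^ 6 * y' = y] (mod int (a*b)))
      \<longleftrightarrow> (\<exists>u \<in> {0..<int a}. coprime u (int a) \<and>
         [u ^ 4 * x' = x] (mod int a) \<and> [u ^ 6 * y' = y] (mod int a)) \<and>
         (\<exists>u \<in> {0..<int b}. coprime u (int b) \<and>
         [u ^ 4 * x' = x] (mod int b) \<and> [u ^ 6 * y' = y] (mod int b))" (is "?L \<longleftrightarrow> ?R1 \<and> ?R2")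
    proof
      assume ?L
      then obtain u where u: "coprime u (int a * int b)" "[u ^ 4 * x' = x] (mod int a * int b)"
        "[u ^ 6 * y' = y] (mod int a * int b)" by auto
      have m: "[u mod m = u] (mod m)" for m :: int by simp
      have "[u ^ 4 * x' = x] (mod int a)" "[u ^ 6 * y' = y] (mod int a)"
        using u cong_modulus_mult by blast+
      moreover have "[u ^ 4 * x' = x] (mod int b)" "[u ^ 6 * y' = y] (mod int b)"
        using u cong_modulus_mult by (metis mult.commute)+
      moreover have "coprime (u mod int a) (int a)" "coprime (u mod int b) (int b)"
        using u cong_imp_coprime[OF cong_sym[OF m[of "int a"]]]
          cong_imp_coprime[OF cong_sym[OF m[of "int b"]]] by auto
      moreover have "u mod int a \<in> {0..<int a}" "u mod int b \<in> {0..<int b}" using a b by simp_all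
      ultimately show "?R1 \<and> ?R2"
        using cong_pow_mult_iff[OF m[of "int a"]] cong_pow_mult_iff[OF m[of "int b"]] by blast
    next
      assume "?R1 \<and> ?R2"
      then obtain u1 u2 where u1: "coprime u1 (int a)" "[u1 ^ 4 * x' = x] (mod int a)" "[u1 ^ 6 * y' = y] (mod int a)"
        and u2: "coprime u2 (int b)" "[u2 ^ 4 * x' = x] (mod int b)" "[u2 ^ 6 * y' = y] (mod int b)"
        by blast
      obtain u where u: "u \<in> {0..<int (a*b)}" "[u = u1] (mod int a)" "[u = u2] (mod int b)"
        using crt[OF cop a b] by blast
      have "coprime u (int a)" "coprime u (int b)"
        using u u1 u2 cong_imp_coprime cong_sym by blast+
      then have "coprime u (int (a*b))" by simp
      moreover have "[u ^ 4 * x' = x] (mod int a)" "[u ^ 6 * y' = y] (mod int a)"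
        using u1 cong_pow_mult_iff[OF u(2)] by blast+
      moreover have "[u ^ 4 * x' = x] (mod int b)" "[u ^ 6 * y' = y] (mod int b)"
        using u2 cong_pow_mult_iff[OF u(3)] by blast+
      ultimately show ?L using u(1) coprime_cong_mult[OF _ _ copi] ab by metis
    qed
    have "(p, q) \<in> curve_iso (a * b) \<longleftrightarrow> ?L"
      using pq by (simp add: curve_iso_def p q)
    also have "... \<longleftrightarrow> ?R1 \<and> ?R2" by (rule E)
    also have "... \<longleftrightarrow> (g p, g q) \<in> ?PR"
      using inA inB by (simp add: curve_iso_def g_def red_def p q cong_mod_inner2)
    finally show ?thesis .
  qed
  have sub: "?PR \<subseteq> (nonsing_curves a \<times> nonsing_curves b) \<times> (nonsing_curves a \<times> nonsing_curves b)"
    using curve_iso_sub[of a] curve_iso_sub[of b] by auto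
  have "C_R (a * b) = card ((nonsing_curves a \<times> nonsing_curves b) // ?PR)"
    unfolding C_R_def by (rule quot_bij[OF bij curve_iso_sub sub iff])
  also have "... = C_R a * C_R b"
    unfolding C_R_def
    by (rule quot_prod[OF curve_iso_sub curve_refl[OF a] curve_iso_sub curve_refl[OF b]])
  finally show ?thesis .
qed

lemma C_R_1: "C_R 1 = 1"
proof -
  have "nonsing_curves 1 = {(0, 0)}" by (auto simp: nonsing_curves_def)
  then have eq: "nonsing_curves 1 // curve_iso 1 = {curve_iso 1 `` {(0, 0)}}"
    by (simp add: quotient_def)
  show ?thesis unfolding C_R_def
    apply (subst eq)
    apply simp
    done
qed

lemma C_R_prod:
  assumes "finite P" "\<forall>p \<in> P. prime p"
  shows "C_R (\<Prod>p \<in> P. p) = (\<Prod>p \<in> P. C_R p)"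
  using assms
proof (induction P rule: finite_induct)
  case empty
  show ?case using C_R_1 by simp
next
  case (insert p F)
  have pp: "prime p" using insert by simp
  have "coprime p (\<Prod>q \<in> F. q)"
    using insert pp by (intro prod_coprime_right primes_coprime) auto
  moreover have "(\<Prod>q \<in> F. q) > 0" using insert
    by (metis prime_gt_0_nat prod_pos insert_iff)
  moreover have "p > 0" using pp prime_gt_0_nat by blast
  ultimately show ?case using insert C_R_mult by simp
qed

theorem theorem10:
  fixes n :: nat and P :: "nat set"
  assumes "finite P"
    and "\<forall>p \<in> P. prime p"
    and "n = (\<Prod>p \<in> P. p)"
    and "odd n"
    and "n > 1" and "\<not> prime n"
  shows "C_R n = (\<Prod>p \<in> P. C_R p)"
  using C_R_prod assms by simp

end
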